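(* Let $p$ be a prime and let $a,b,c$ be positive integers with $b>1$, $c\mid p^a-1$, $c$ a primitive divisor of $p^a-1$, and $p-1\mid c$. Put $m=ab$, $n=bc$, $u=\frac{p^a-1}{c}$, assume $n$ is a primitive divisor of $p^m-1$, and put $k=\frac{p^m-1}{n}$. Then for each $\beta\in\mathbb{F}_{p^m}$ there exist $\alpha_1,\dots,\alpha_b\in\mathbb{F}_{p^a}$ such that $$\#C_{k,\beta}(\mathbb{F}_{p^m})=\tfrac1b\Psi_b(p^a)\sum_{i=1}^b\#C_{u,\alpha_i}(\mathbb{F}_{p^a})-(p+1)p^a\Psi_{b-1}(p^a).\qquad(\ast)$$ Conversely, for any $\alpha_1,\dots,\alpha_b\in\mathbb{F}_{p^a}$ there exists $\beta\in\mathbb{F}_{p^m}$ satisfying $(\ast)$.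
   Context: $\Psi_b(x)=x^{b-1}+\cdots+x+1$. For a prime power $Q=p^M$, an integer $k$ and $\beta\in\mathbb{F}_Q$, $C_{k,\beta}$ is the Artin–Schreier curve $y^p-y=\beta x^k$, and $\#C_{k,\beta}(\mathbb{F}_Q):=1+\#\{(x,y)\in\mathbb{F}_Q^2: y^p-y=\beta x^k\}$. A positive integer $d$ is a primitive divisor of $p^M-1$ if $d\mid p^M-1$ and $d\nmid p^t-1$ for all $1\le t<M$. *)

theory Defs
  imports Complex_Main "HOL-Computational_Algebra.Primes"
begin

definition Psi :: "nat \<Rightarrow> real \<Rightarrow> real" where
  "Psi b x = (\<Sum>i<b. x ^ i)"

text \<open>Number of F-rational points (including the point at infinity) of the
Artin--Schreier curve y^p - y = beta x^k over the finite field given by the type.\<close>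
definition AS_points :: "nat \<Rightarrow> nat \<Rightarrow> 'a::{field,finite} \<Rightarrow> nat" where
  "AS_points p k beta = 1 + card {(x :: 'a, y). y ^ p - y = beta * x ^ k}"

definition primitive_divisor :: "nat \<Rightarrow> nat \<Rightarrow> nat \<Rightarrow> bool" where
  "primitive_divisor p M d \<longleftrightarrow> 0 < d \<and> d dvd p ^ M - 1 \<and>
     (\<forall>t. 1 \<le> t \<and> t < M \<longrightarrow> \<not> d dvd p ^ t - 1)"

end

theory Submission
  imports Defs "HOL-Computational_Algebra.Polynomial" "HOL-Algebra.Multiplicative_Group"
begin

definition tr :: "nat \<Rightarrow> nat \<Rightarrow> 'a::comm_ring_1 \<Rightarrow> 'a" where
  "tr p e t = (\<Sum>i<e. t ^ (p ^ i))"

lemma roots_le: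
  fixes P :: "'a::idom poly"
  assumes "P \<noteq> 0" "degree P \<le> d"
  shows "card {x. poly P x = 0} \<le> d"
  using card_poly_roots_bound[OF assms(1)] assms(2) by linarith

locale ffield =
  fixes p e :: nat and ty :: "'a::{field,finite} itself"
  assumes prime_p: "prime p" and e_pos: "e > 0"
      and card_F: "card (UNIV :: 'a set) = p ^ e"
begin

lemma p_gt1: "p > 1" using prime_p prime_gt_1_nat by blast
lemma p_pos: "p > 0" using p_gt1 by simp

lemma char_eq: "CHAR('a) = p"
proof -
  have im: "(\<lambda>x::'a. x + 1) ` UNIV = UNIV"
    by (auto intro!: image_eqI[of _ _ "x - 1" for x])
  have "(\<Sum>x\<in>(UNIV::'a set). x + 1) = (\<Sum>x\<in>(\<lambda>x. x+1) ` UNIV. x)"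
    by (subst sum.reindex) (auto simp: inj_on_def)
  then have "(\<Sum>x\<in>(UNIV::'a set). x) = (\<Sum>x\<in>UNIV. x + 1)" by (simp only: im)
  also have "\<dots> = (\<Sum>x\<in>(UNIV::'a set). x) + of_nat (card (UNIV::'a set))"
    by (simp add: sum.distrib)
  finally have "of_nat (card (UNIV::'a set)) = (0::'a)" by simp
  hence "CHAR('a) dvd p ^ e" using card_F of_nat_eq_0_iff_char_dvd by metis
  moreover have "CHAR('a) > 0" by (rule finite_imp_CHAR_pos) simp
  then have "prime CHAR('a)" by (rule prime_CHAR_semidom)
  ultimately have "CHAR('a) dvd p" using prime_dvd_power by blast
  thus ?thesis using \<open>prime CHAR('a)\<close> prime_p primes_dvd_imp_eq by blast
qed

lemma prime_char: "prime CHAR('a)" using char_eq prime_p by simp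

lemma frob_add: "((x::'a) + y) ^ (p ^ i) = x ^ (p ^ i) + y ^ (p ^ i)"
  by (rule freshmans_dream') (auto simp: char_eq prime_p)

lemma frob_minus: "(- (x::'a)) ^ (p ^ i) = - (x ^ (p ^ i))"
proof -
  have "(x + (-x)) ^ (p ^ i) = 0" using p_pos by simp
  hence "x ^ (p ^ i) + (-x) ^ (p ^ i) = 0" by (simp only: frob_add)
  thus ?thesis by (simp add: eq_neg_iff_add_eq_0 add.commute)
qed

lemma frob_diff: "((x::'a) - y) ^ (p ^ i) = x ^ (p ^ i) - y ^ (p ^ i)"
  using frob_add[of x "-y" i] frob_minus[of y i] by simp

lemma frob_sum: "(\<Sum>j\<in>A. f j :: 'a) ^ (p ^ i) = (\<Sum>j\<in>A. f j ^ (p ^ i))"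
  by (induction A rule: infinite_finite_induct) (auto simp: frob_add p_pos)

lemma frob_add1: "((x::'a) + y) ^ p = x ^ p + y ^ p"
  using frob_add[of x y 1] by simp

lemma pow_card: "(x::'a) ^ (p ^ e) = x"
proof (cases "x = 0")
  case False
  have "x * (\<Prod>y\<in>UNIV-{0}. x * y) = x * x ^ (card (UNIV :: 'a set) - 1) * \<Prod>(UNIV-{0})"
    by (simp add: prod.distrib mult_ac)
  also have "x * x ^ (card (UNIV :: 'a set) - 1) = x ^ Suc (card (UNIV :: 'a set) - 1)"
    by (subst power_Suc) auto
  also have "Suc (card (UNIV :: 'a set) - 1) = card (UNIV :: 'a set)"
    using finite_UNIV_card_ge_0[where ?'a = 'a] by simp
  also have "(\<Prod>y\<in>UNIV-{0}. x * y) = (\<Prod>y\<in>UNIV-{0}. y)"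
    by (rule prod.reindex_bij_witness[of _ "\<lambda>y. y / x" "\<lambda>y. x * y"]) (use False in auto)
  finally show ?thesis
    using card_F by simp
qed (use p_pos e_pos in auto)

lemma pow_card_pow: "(x::'a) ^ ((p ^ e) ^ j) = x"
  by (induction j) (simp_all add: pow_card power_mult)

lemma of_nat_frob: "(of_nat n :: 'a) ^ p = of_nat n"
  by (induction n) (simp_all add: frob_add1 p_pos)

lemma of_int_frob1: "(of_int z :: 'a) ^ p = of_int z"
proof (cases "z \<ge> 0")
  case True
  then show ?thesis using of_nat_frob[of "nat z"] by simp
next
  case False
  then have "(of_int z :: 'a) = - of_nat (nat (-z))" by simp
  then show ?thesis using of_nat_frob[of "nat (-z)"] frob_minus[of "of_nat (nat (-z))" 1] by simp
qed

lemma of_int_frob: "(of_int z :: 'a) ^ (p ^ i) = of_int z"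
  by (induction i) (simp_all add: power_mult of_int_frob1)

lemma of_int_eq0: "(of_int z :: 'a) = 0 \<longleftrightarrow> int p dvd z"
  using of_int_eq_0_iff_char_dvd char_eq by metis

lemma tr_sum: "tr p e (x + y :: 'a) = tr p e x + tr p e y"
  by (simp add: tr_def frob_add sum.distrib)

lemma ker_card: "card {y::'a. y ^ p = y} = p"
proof (rule antisym)
  let ?P = "Polynomial.monom (1::'a) p + [:0, -1:]"
  have deg: "degree ?P = p" using p_gt1
    by (subst degree_add_eq_left) (simp_all add: degree_monom_eq)
  have "?P \<noteq> 0" using deg p_gt1 by (metis degree_0 not_one_less_zero)
  have "{y::'a. y ^ p = y} = {x. poly ?P x = 0}" by (simp add: poly_monom)
  thus "card {y::'a. y ^ p = y} \<le> p" using roots_le[OF \<open>?P \<noteq> 0\<close>] deg by simp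
  have sub: "of_nat ` {..<p} \<subseteq> {y::'a. y ^ p = y}" using of_nat_frob by blast
  have inj: "inj_on (of_nat :: nat \<Rightarrow> 'a) {..<p}"
  proof (rule inj_onI)
    fix i j assume ij: "i \<in> {..<p}" "j \<in> {..<p}" "(of_nat i :: 'a) = of_nat j"
    show "i = j"
    proof (rule ccontr)
      assume "i \<noteq> j"
      then consider "i < j" | "j < i" by linarith
      then show False
      proof cases
        case 1
        then have "p dvd (j - i)" using of_nat_eq_iff_char_dvd[OF 1] char_eq ij(3) by metis
        moreover have "0 < j - i" "j - i < p" using 1 ij(2) by auto
        ultimately show False using nat_dvd_not_less by blast
      next
        case 2
        then have "p dvd (i - j)" using of_nat_eq_iff_char_dvd[OF 2] char_eq ij(3) by metis
        moreover have "0 < i - j" "i - j < p" using 2 ij(1) by auto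
        ultimately show False using nat_dvd_not_less by blast
      qed
    qed
  qed
  have "p = card (of_nat ` {..<p} :: 'a set)" using card_image[OF inj] by simp
  also have "\<dots> \<le> card {y::'a. y ^ p = y}" by (rule card_mono[OF _ sub]) simp
  finally show "p \<le> card {y::'a. y ^ p = y}" .
qed

lemma tr_card: "card {t::'a. tr p e t = 0} \<le> p ^ (e - 1)"
proof -
  let ?P = "\<Sum>i<e. Polynomial.monom (1::'a) (p ^ i)"
  have ev: "poly ?P t = tr p e t" for t by (simp add: tr_def poly_sum poly_monom)
  have degle: "degree ?P \<le> p ^ (e - 1)"
  proof (rule degree_sum_le)
    fix i assume "i \<in> {..<e}"
    then have "p ^ i \<le> p ^ (e - 1)" using p_pos by (intro power_increasing) auto
    then show "degree (Polynomial.monom (1::'a) (p ^ i)) \<le> p ^ (e - 1)"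
      using degree_monom_le[of "1::'a" "p ^ i"] by linarith
  qed simp
  have inj: "p ^ i = p ^ j \<longleftrightarrow> i = j" for i j using p_gt1 by (simp add: power_inject_exp)
  have "poly.coeff ?P (p ^ (e - 1)) = (\<Sum>i<e. if i = e - 1 then 1 else 0)"
    by (simp add: coeff_sum coeff_monom inj)
  also have "\<dots> = 1" using e_pos by simp
  finally have "?P \<noteq> 0" by auto
  have "{t::'a. tr p e t = 0} = {x. poly ?P x = 0}" by (simp add: ev)
  then show ?thesis using roots_le[OF \<open>?P \<noteq> 0\<close> degle] by simp
qed

lemma tr_AS: "tr p e ((y::'a) ^ p - y) = 0"
proof -
  have "tr p e (y ^ p - y) = (\<Sum>i<e. y ^ (p ^ Suc i) - y ^ (p ^ i))"
    by (simp add: tr_def frob_diff power_mult[symmetric] mult.commute)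
  also have "\<dots> = y ^ (p ^ e) - y" by (subst sum_lessThan_telescope) simp
  finally show ?thesis by (simp add: pow_card)
qed

lemma AS_fiber: "card {y::'a. y ^ p - y = t} = (if tr p e t = 0 then p else 0)"
proof -
  let ?f = "\<lambda>y::'a. y ^ p - y"
  have fib: "card {y. y ^ p - y = t} = p" if "t \<in> range ?f" for t
  proof -
    obtain y0 where y0: "y0 ^ p - y0 = t" using \<open>t \<in> range ?f\<close> by auto
    have "{y. y ^ p - y = t} = (\<lambda>z. z + y0) ` {y. y ^ p = y}"
    proof (intro equalityI subsetI)
      fix y assume "y \<in> {y. y ^ p - y = t}"
      then have yt: "y ^ p - y = t" by simp
      have "(y - y0) ^ p = y ^ p - y0 ^ p" using frob_diff[of y y0 1] by simp
      also have "\<dots> = y - y0" using yt y0 by (simp add: algebra_simps)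
      finally have "(y - y0) ^ p = y - y0" .
      then show "y \<in> (\<lambda>z. z + y0) ` {y. y ^ p = y}" by (intro image_eqI[of _ _ "y - y0"]) simp_all
    next
      fix y assume "y \<in> (\<lambda>z. z + y0) ` {y. y ^ p = y}"
      then obtain z where z: "z ^ p = z" "y = z + y0" by auto
      have "y ^ p - y = z ^ p + y0 ^ p - (z + y0)" using z(2) frob_add1[of z y0] by simp
      also have "\<dots> = t" using z(1) y0 by (simp add: algebra_simps)
      finally show "y \<in> {y. y ^ p - y = t}" by simp
    qed
    moreover have "inj_on (\<lambda>z. z + y0) {y. y ^ p = y}" by (simp add: inj_on_def)
    ultimately show ?thesis using ker_card card_image by metis
  qed
  have "card (UNIV::'a set) = (\<Sum>t\<in>range ?f. card {y. y ^ p - y = t})"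
    using sum.group[of UNIV "range ?f" ?f "\<lambda>_. 1::nat"] by simp
  also have "\<dots> = (\<Sum>t\<in>range ?f. p)" by (rule sum.cong[OF refl fib])
  also have "\<dots> = card (range ?f) * p" by simp
  finally have cr: "card (range ?f) * p = p ^ e" using card_F by simp
  have "range ?f \<subseteq> {t. tr p e t = 0}" using tr_AS by auto
  moreover have "card (range ?f) = p ^ (e - 1)"
  proof -
    have "p ^ e = p ^ (e - 1) * p" using e_pos by (metis Suc_diff_1 power_Suc2)
    then show ?thesis using cr p_pos by simp
  qed
  ultimately have eq: "range ?f = {t. tr p e t = 0}"
    using tr_card by (intro card_seteq) auto
  show ?thesis
  proof (cases "tr p e t = 0")
    case True then show ?thesis using fib eq by auto
  next
    case False then have "{y. ?f y = t} = {}" using tr_AS by auto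
    then show ?thesis using False by simp
  qed
qed

end

context ffield begin

lemma pow_card1: "(x::'a) \<noteq> 0 \<Longrightarrow> x ^ (p ^ e - 1) = 1"
proof -
  assume "x \<noteq> 0"
  have pe: "p ^ e = Suc (p ^ e - 1)" using p_pos by simp
  have "x ^ (p ^ e) = x * x ^ (p ^ e - 1)" using pe by (metis power_Suc)
  then have "x * x ^ (p ^ e - 1) = x * 1" using pow_card[of x] by simp
  then show ?thesis using \<open>x \<noteq> 0\<close> by simp
qed

lemma roots_pow_le:
  assumes "n > 0"
  shows "card {x::'a. x ^ n = c} \<le> n"
proof -
  let ?P = "Polynomial.monom (1::'a) n + [:-c:]"
  have deg: "degree ?P = n" using assms
    by (subst degree_add_eq_left) (simp_all add: degree_monom_eq)
  have "?P \<noteq> 0" using deg assms by (metis degree_0 less_irrefl)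
  have "{x::'a. x ^ n = c} = {x. poly ?P x = 0}" by (simp add: poly_monom)
  thus ?thesis using roots_le[OF \<open>?P \<noteq> 0\<close>] deg by simp
qed

lemma pow_fibers:
  assumes dk: "d * k = p ^ e - 1" and k: "k > 0"
  shows "card {h::'a. h ^ d = 1} = d"
    and "card {x::'a. x \<noteq> 0 \<and> P (x ^ k)} = k * card {h. h ^ d = 1 \<and> P h}"
proof -
  let ?S = "UNIV - {0::'a}"
  let ?H = "{h::'a. h ^ d = 1}"
  let ?fib = "\<lambda>h. {x \<in> ?S. x ^ k = h}"
  have pe1: "p ^ e - 1 > 0" using p_gt1 e_pos by (metis one_less_power zero_less_diff)
  then have d: "d > 0" using dk by (metis mult_is_0 neq0_conv)
  have cS: "card ?S = d * k" using card_F dk by (simp add: card_Diff_singleton)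
  have maps: "(\<lambda>x. x ^ k) ` ?S \<subseteq> ?H"
  proof
    fix h assume "h \<in> (\<lambda>x. x ^ k) ` ?S"
    then obtain x where "x \<noteq> 0" "h = x ^ k" by auto
    then show "h \<in> ?H" using pow_card1[of x] dk by (simp add: power_mult[symmetric] mult.commute)
  qed
  have fibk: "card (?fib h) \<le> k" for h
  proof -
    have "?fib h \<subseteq> {x. x ^ k = h}" by auto
    then show ?thesis using roots_pow_le[OF k, of h] by (meson card_mono finite order_trans)
  qed
  have cH: "card ?H \<le> d" using roots_pow_le[OF d, of 1] .
  have sumfib: "(\<Sum>h\<in>?H. card (?fib h)) = d * k"
    using sum.group[of ?S ?H "\<lambda>x. x ^ k" "\<lambda>_. 1::nat"] maps cS by simp
  have "d * k \<le> (\<Sum>h\<in>?H. k)" unfolding sumfib[symmetric] by (rule sum_mono[OF fibk])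
  also have "\<dots> = card ?H * k" by simp
  finally have "d * k \<le> card ?H * k" .
  then have "d \<le> card ?H" using k by simp
  then show cH': "card ?H = d" using cH by simp
  have fibeq: "card (?fib h) = k" if "h \<in> ?H" for h
  proof (rule ccontr)
    assume "card (?fib h) \<noteq> k"
    then have "card (?fib h) < k" using fibk[of h] by simp
    then have "(\<Sum>h\<in>?H. card (?fib h)) < (\<Sum>h\<in>?H. k)"
      using that fibk by (intro sum_strict_mono_ex1) auto
    then show False using sumfib cH' by simp
  qed
  have "card {x::'a. x \<noteq> 0 \<and> P (x ^ k)} = (\<Sum>x\<in>?S. if P (x ^ k) then 1 else 0)"
    by (simp add: sum.If_cases Int_def)
  also have "\<dots> = (\<Sum>h\<in>?H. \<Sum>x\<in>?fib h. if P (x ^ k) then 1 else 0)"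
    using sum.group[of ?S ?H "\<lambda>x. x ^ k" "\<lambda>x. if P (x ^ k) then 1 else (0::nat)"] maps by simp
  also have "\<dots> = (\<Sum>h\<in>?H. if P h then k else 0)"
  proof (rule sum.cong[OF refl])
    fix h assume "h \<in> ?H"
    have "(\<Sum>x\<in>?fib h. if P (x ^ k) then 1 else (0::nat)) = (\<Sum>x\<in>?fib h. if P h then 1 else 0)"
      by (rule sum.cong) auto
    also have "\<dots> = (if P h then k else 0)" using fibeq[OF \<open>h \<in> ?H\<close>] by simp
    finally show "(\<Sum>x\<in>?fib h. if P (x ^ k) then 1 else (0::nat)) = (if P h then k else 0)" .
  qed
  also have "\<dots> = k * card {h. h ^ d = 1 \<and> P h}"
    by (simp add: sum.If_cases Int_def conj_commute)
  finally show "card {x::'a. x \<noteq> 0 \<and> P (x ^ k)} = k * card {h. h ^ d = 1 \<and> P h}" .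
qed

lemma tr_zero: "tr p e (0::'a) = 0"
  using p_pos by (simp add: tr_def power_0_left)

lemma AS_formula:
  assumes dk: "d * k = p ^ e - 1" and k: "k > 0"
  shows "AS_points p k (\<beta>::'a) = 1 + p * (1 + k * card {h. h ^ d = 1 \<and> tr p e (\<beta> * h) = 0})"
proof -
  have "{(x :: 'a, y). y ^ p - y = \<beta> * x ^ k} = Sigma UNIV (\<lambda>x. {y. y ^ p - y = \<beta> * x ^ k})"
    by auto
  then have "card {(x :: 'a, y). y ^ p - y = \<beta> * x ^ k} = (\<Sum>x\<in>UNIV. card {y. y ^ p - y = \<beta> * x ^ k})"
    by simp
  also have "\<dots> = (\<Sum>x\<in>UNIV. if tr p e (\<beta> * x ^ k) = 0 then p else 0)"
    by (simp only: AS_fiber)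
  also have "\<dots> = p * card {x. tr p e (\<beta> * x ^ k) = 0}"
    by (simp add: sum.If_cases)
  also have "{x. tr p e (\<beta> * x ^ k) = 0} = insert 0 {x. x \<noteq> 0 \<and> tr p e (\<beta> * x ^ k) = 0}"
    using k tr_zero by (auto simp: power_0_left)
  also have "card \<dots> = 1 + k * card {h. h ^ d = 1 \<and> tr p e (\<beta> * h) = 0}"
    using pow_fibers(2)[OF dk k, of "\<lambda>h. tr p e (\<beta> * h) = 0"] by simp
  finally show ?thesis unfolding AS_points_def by simp
qed

end

definition tring :: "'a::Fields.field ring" where
  "tring = \<lparr>carrier = UNIV, monoid.mult = (\<lambda>x y. x * y), one = 1, ring.zero = 0, add = (\<lambda>x y. x + y)\<rparr>"

lemma field_tring: "field (tring :: 'a::Fields.field ring)"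
proof -
  have "\<exists>y. x + y = 0" for x :: 'a
    using add.right_inverse by blast
  moreover have "x \<noteq> 0 \<Longrightarrow> \<exists>y. x * y = 1" for x :: 'a
    by (rule exI[of _ "inverse x"]) auto
  ultimately show ?thesis
    unfolding tring_def using add.right_inverse
    by unfold_locales (auto simp:algebra_simps Units_def)
qed

lemma tring_pow: "x [^]\<^bsub>tring\<^esub> (n::nat) = (x::'a::Fields.field) ^ n"
  by (induction n) (simp_all add: tring_def)

lemma exists_gen:
  "\<exists>g::'a::{Fields.field,finite}. g \<noteq> 0 \<and> (\<forall>x. x \<noteq> 0 \<longrightarrow> (\<exists>i. x = g ^ i))"
proof -
  interpret R: field "tring :: 'a ring" by (rule field_tring)
  have "finite (carrier (tring :: 'a ring))" by simp
  from R.finite_field_mult_group_has_gen[OF this] obtain a where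
    "a \<in> carrier (mult_of tring)" and A: "carrier (mult_of (tring :: 'a ring)) = {a [^]\<^bsub>tring\<^esub> i | i::nat. i \<in> UNIV}"
    by (auto simp: nat_pow_mult_of)
  have "x \<noteq> 0 \<Longrightarrow> \<exists>i. x = a ^ i" for x
  proof -
    assume "x \<noteq> 0"
    then have "x \<in> carrier (mult_of (tring :: 'a ring))" by (simp add: tring_def)
    then show ?thesis unfolding A by (auto simp: tring_pow)
  qed
  moreover have "a \<noteq> 0" using \<open>a \<in> carrier (mult_of tring)\<close> by (simp add: tring_def)
  ultimately show ?thesis by blast
qed

context ffield begin

lemma gen_order:
  obtains g :: 'a where "g \<noteq> 0" "\<And>x. x \<noteq> 0 \<Longrightarrow> \<exists>i. x = g ^ i" "\<And>i. 0 < i \<Longrightarrow> i < p ^ e - 1 \<Longrightarrow> g ^ i \<noteq> 1"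
proof -
  obtain g :: 'a where g0: "g \<noteq> 0" and g: "\<And>x. x \<noteq> 0 \<Longrightarrow> \<exists>i. x = g ^ i" using exists_gen by blast
  have "g ^ i \<noteq> 1" if i: "0 < i" "i < p ^ e - 1" for i
  proof
    assume gi: "g ^ i = 1"
    have gm: "g ^ j = g ^ (j mod i)" for j
    proof -
      have "g ^ j = g ^ (i * (j div i) + j mod i)" by simp
      also have "\<dots> = (g ^ i) ^ (j div i) * g ^ (j mod i)" by (simp only: power_add power_mult)
      finally show ?thesis using gi by simp
    qed
    have "UNIV - {0} \<subseteq> (\<lambda>j. g ^ j) ` {..<i}"
    proof
      fix x assume "x \<in> UNIV - {0::'a}"
      then obtain j where "x = g ^ j" using g by auto
      then have "x = g ^ (j mod i)" using gm by metis
      moreover have "j mod i \<in> {..<i}" using i(1) by simp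
      ultimately show "x \<in> (\<lambda>j. g ^ j) ` {..<i}" by blast
    qed
    then have "card (UNIV - {0::'a}) \<le> card ((\<lambda>j. g ^ j) ` {..<i})" by (intro card_mono) auto
    also have "\<dots> \<le> i" using card_image_le[of "{..<i}" "\<lambda>j. g ^ j"] by simp
    finally show False using card_F i(2) by (simp add: card_Diff_singleton)
  qed
  then show ?thesis using that g g0 by blast
qed

lemma elem_order:
  assumes "n * k = p ^ e - 1" "k > 0"
  obtains z :: 'a where "z ^ n = 1" "\<And>j. 0 < j \<Longrightarrow> j < n \<Longrightarrow> z ^ j \<noteq> 1"
proof -
  obtain g :: 'a where g: "g \<noteq> 0" "\<And>x. x \<noteq> 0 \<Longrightarrow> \<exists>i. x = g ^ i" "\<And>i. 0 < i \<Longrightarrow> i < p ^ e - 1 \<Longrightarrow> g ^ i \<noteq> 1"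
    using gen_order by metis
  have "(g ^ k) ^ n = 1" using pow_card1[OF g(1)] assms(1) by (simp add: power_mult[symmetric] mult.commute)
  moreover have "(g ^ k) ^ j \<noteq> 1" if "0 < j" "j < n" for j
  proof -
    have "k * j < k * n" using that assms(2) by simp
    moreover have "k * n = p ^ e - 1" using assms(1) by (simp add: mult.commute)
    ultimately have "k * j < p ^ e - 1" by linarith
    moreover have "0 < k * j" using that assms(2) by simp
    ultimately show ?thesis using g(3) by (simp add: power_mult[symmetric])
  qed
  ultimately show ?thesis using that by blast
qed

lemma order_pow_mod:
  assumes "(z::'a) ^ n = 1"
  shows "z ^ i = z ^ (i mod n)"
proof -
  have "z ^ i = z ^ (n * (i div n) + i mod n)" by simp
  also have "\<dots> = (z ^ n) ^ (i div n) * z ^ (i mod n)" by (simp only: power_add power_mult)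
  finally show ?thesis using assms by simp
qed

lemma order_inj:
  assumes "(z::'a) ^ n = 1" "\<And>j. 0 < j \<Longrightarrow> j < n \<Longrightarrow> z ^ j \<noteq> 1"
  shows "inj_on (\<lambda>j. z ^ j) {..<n}"
proof (rule inj_onI)
  fix i j assume ij: "i \<in> {..<n}" "j \<in> {..<n}" "z ^ i = z ^ j"
  have z0: "z \<noteq> 0"
  proof
    assume "z = 0"
    then have "n = 0" using assms(1) by (simp add: power_0_left split: if_splits)
    then show False using ij by simp
  qed
  show "i = j"
  proof (rule ccontr)
    assume "i \<noteq> j"
    then consider "i < j" | "j < i" by linarith
    then show False
    proof cases
      case 1
      have "z ^ j = z ^ i * z ^ (j - i)" using 1 by (simp add: power_add[symmetric])
      then have "z ^ (j - i) = 1" using ij(3) z0 by simp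
      moreover have "0 < j - i" "j - i < n" using 1 ij(2) by auto
      ultimately show False using assms(2) by blast
    next
      case 2
      have "z ^ i = z ^ j * z ^ (i - j)" using 2 by (simp add: power_add[symmetric])
      then have "z ^ (i - j) = 1" using ij(3) z0 by simp
      moreover have "0 < i - j" "i - j < n" using 2 ij(1) by auto
      ultimately show False using assms(2) by blast
    qed
  qed
qed

lemma order_roots:
  assumes "(z::'a) ^ n = 1" "\<And>j. 0 < j \<Longrightarrow> j < n \<Longrightarrow> z ^ j \<noteq> 1" "n > 0"
  shows "{h. h ^ n = 1} = (\<lambda>j. z ^ j) ` {..<n}"
proof -
  have "(z ^ j) ^ n = 1" for j
  proof -
    have "(z ^ j) ^ n = (z ^ n) ^ j" by (metis power_mult mult.commute)
    then show ?thesis using assms(1) by simp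
  qed
  then have sub: "(\<lambda>j. z ^ j) ` {..<n} \<subseteq> {h. h ^ n = 1}" by auto
  have "card ((\<lambda>j. z ^ j) ` {..<n}) = n" using card_image[OF order_inj[OF assms(1,2)]] by simp
  moreover have "card {h::'a. h ^ n = 1} \<le> n" by (rule roots_pow_le[OF assms(3)])
  ultimately show ?thesis using sub by (metis card_seteq finite)
qed

end

definition ev :: "int poly \<Rightarrow> 'a::comm_ring_1 \<Rightarrow> 'a" where
  "ev g x = poly (map_poly of_int g) x"

lemma map_of_int_add: "map_poly (of_int::int\<Rightarrow>'a::comm_ring_1) (f + g) = map_poly of_int f + map_poly of_int g"
  by (rule poly_eqI) (simp add: coeff_map_poly)

lemma map_of_int_diff: "map_poly (of_int::int\<Rightarrow>'a::comm_ring_1) (f - g) = map_poly of_int f - map_poly of_int g"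
  by (rule poly_eqI) (simp add: coeff_map_poly)

lemma map_of_int_mult: "map_poly (of_int::int\<Rightarrow>'a::comm_ring_1) (f * g) = map_poly of_int f * map_poly of_int g"
  by (rule poly_eqI) (simp add: coeff_map_poly coeff_mult)

lemma ev_add: "ev (f + g) x = ev f x + ev g x" by (simp add: ev_def map_of_int_add)
lemma ev_diff: "ev (f - g) x = ev f x - ev g x" by (simp add: ev_def map_of_int_diff)
lemma ev_mult: "ev (f * g) x = ev f x * ev g x" by (simp add: ev_def map_of_int_mult)
lemma ev_monom: "ev (Polynomial.monom c j) x = of_int c * x ^ j"
  by (simp add: ev_def map_poly_monom poly_monom)
lemma ev_pCons: "ev (pCons c g) x = of_int c + x * ev g x"
  by (simp add: ev_def map_poly_pCons)
lemma ev_0: "ev 0 x = 0" by (simp add: ev_def)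

lemma monic_div:
  fixes mu g :: "int poly"
  assumes "poly.coeff mu (degree mu) = 1" "degree mu > 0"
  shows "\<exists>s r. g = mu * s + r \<and> degree r < degree mu"
proof -
  have "mu \<noteq> 0" using assms by auto
  obtain s r where sr: "pseudo_divmod g mu = (s, r)" by (cases "pseudo_divmod g mu") auto
  from pseudo_divmod[OF \<open>mu \<noteq> 0\<close> sr] assms have "g = mu * s + r" "r = 0 \<or> degree r < degree mu" by auto
  moreover have "degree r < degree mu" using calculation(2) assms(2) by auto
  ultimately show ?thesis by blast
qed

context ffield begin

lemma ev_frob: "ev g ((x::'a) ^ (p ^ t)) = (ev g x) ^ (p ^ t)"
proof (induction g rule: pCons_induct)
  case 0 then show ?case using p_pos by (simp add: ev_0 power_0_left)
next
  case (pCons c g)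
  have "ev (pCons c g) (x ^ p ^ t) = of_int c + x ^ p ^ t * (ev g x) ^ (p ^ t)"
    by (simp add: ev_pCons pCons.IH)
  also have "\<dots> = (of_int c + x * ev g x) ^ (p ^ t)"
    by (simp add: frob_add of_int_frob power_mult_distrib)
  finally show ?case by (simp add: ev_pCons)
qed

lemma ev_dvd_zero: "(\<And>i. int p dvd poly.coeff g i) \<Longrightarrow> ev g (x::'a) = 0"
proof -
  assume "\<And>i. int p dvd poly.coeff g i"
  then have "map_poly (of_int :: int \<Rightarrow> 'a) g = 0"
    by (intro poly_eqI) (simp add: coeff_map_poly of_int_eq0)
  then show ?thesis by (simp add: ev_def)
qed

lemma roots_frob_le:
  assumes "n > 1"
  shows "card {x::'a. x ^ n = x} \<le> n"
proof -
  let ?P = "Polynomial.monom (1::'a) n + [:0, -1:]"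
  have deg: "degree ?P = n" using assms
    by (subst degree_add_eq_left) (simp_all add: degree_monom_eq)
  have "?P \<noteq> 0" using deg assms by (metis degree_0 not_one_less_zero)
  have "{x::'a. x ^ n = x} = {x. poly ?P x = 0}" by (simp add: poly_monom)
  thus ?thesis using roots_le[OF \<open>?P \<noteq> 0\<close>] deg by simp
qed

lemma geom_lt: "(\<Sum>t<j. p ^ t) < p ^ j"
proof (induction j)
  case (Suc j)
  have "(\<Sum>t<Suc j. p ^ t) = (\<Sum>t<j. p ^ t) + p ^ j" by simp
  also have "\<dots> < p ^ j + p ^ j" using Suc by simp
  also have "\<dots> = 2 * p ^ j" by simp
  also have "\<dots> \<le> p * p ^ j" using p_gt1 by (intro mult_right_mono) auto
  finally show ?case by simp
qed simp

lemma exists_period: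
  obtains \<gamma> :: 'a where "\<And>t. 0 < t \<Longrightarrow> t < e \<Longrightarrow> \<gamma> ^ (p ^ t) \<noteq> \<gamma>"
proof -
  let ?B = "\<Union>t\<in>{0<..<e}. {x::'a. x ^ (p ^ t) = x}"
  have "card ?B \<le> (\<Sum>t\<in>{0<..<e}. card {x::'a. x ^ (p ^ t) = x})" by (rule card_UN_le) simp
  also have "\<dots> \<le> (\<Sum>t\<in>{0<..<e}. p ^ t)"
  proof (rule sum_mono)
    fix t assume "t \<in> {0<..<e}"
    then have "p ^ t > 1" using p_gt1 by (intro one_less_power) auto
    then show "card {x::'a. x ^ (p ^ t) = x} \<le> p ^ t" by (rule roots_frob_le)
  qed
  also have "\<dots> \<le> (\<Sum>t<e. p ^ t)" by (rule sum_mono2) auto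
  also have "\<dots> < p ^ e" by (rule geom_lt)
  finally have "card ?B < card (UNIV :: 'a set)" using card_F by simp
  then have "?B \<noteq> UNIV" by (metis less_irrefl)
  then obtain \<gamma> where g: "\<gamma> \<notin> ?B" by blast
  have "\<gamma> ^ (p ^ t) \<noteq> \<gamma>" if "0 < t" "t < e" for t
  proof
    assume "\<gamma> ^ (p ^ t) = \<gamma>"
    then have "\<gamma> \<in> ?B" using that by (intro UN_I[of t]) auto
    then show False using g by contradiction
  qed
  then show ?thesis using that by blast
qed

lemma pw: "((\<gamma>::'a) ^ (p ^ i)) ^ (p ^ j) = \<gamma> ^ (p ^ (i + j))"
  by (simp only: power_add power_mult)

lemma period_inj:
  assumes per: "\<And>t. 0 < t \<Longrightarrow> t < e \<Longrightarrow> (\<gamma>::'a) ^ (p ^ t) \<noteq> \<gamma>"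
  shows "inj_on (\<lambda>t. \<gamma> ^ (p ^ t)) {..<e}"
proof -
  have key: False if st: "s < t" "t < e" and eq: "\<gamma> ^ (p ^ s) = \<gamma> ^ (p ^ t)" for s t
  proof -
    have te: "t + (e - t) = e" using st by simp
    have last: "\<gamma> ^ (p ^ (t + (e - t))) = \<gamma>" unfolding te by (rule pow_card)
    have "\<gamma> ^ (p ^ (s + (e - t))) = (\<gamma> ^ (p ^ s)) ^ (p ^ (e - t))" by (rule pw[symmetric])
    also have "\<dots> = (\<gamma> ^ (p ^ t)) ^ (p ^ (e - t))" by (simp only: eq)
    also have "\<dots> = \<gamma> ^ (p ^ (t + (e - t)))" by (rule pw)
    also have "\<dots> = \<gamma>" by (rule last)
    finally have eq2: "\<gamma> ^ (p ^ (s + (e - t))) = \<gamma>" .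
    have "0 < s + (e - t)" "s + (e - t) < e" using st by auto
    from per[OF this] eq2 show False by contradiction
  qed
  show ?thesis
  proof (rule inj_onI)
    fix s t assume st: "s \<in> {..<e}" "t \<in> {..<e}" "\<gamma> ^ (p ^ s) = \<gamma> ^ (p ^ t)"
    show "s = t"
    proof (rule ccontr)
      assume "s \<noteq> t"
      then consider "s < t" | "t < s" by linarith
      then show False
      proof cases
        case 1 then show False using key[of s t] st by simp
      next
        case 2 then show False using key[of t s] st by simp
      qed
    qed
  qed
qed

lemma lemC:
  assumes per: "\<And>t. 0 < t \<Longrightarrow> t < e \<Longrightarrow> (\<gamma>::'a) ^ (p ^ t) \<noteq> \<gamma>"
      and deg: "degree \<rho> < e" and ev0: "ev \<rho> \<gamma> = 0"
  shows "int p dvd poly.coeff \<rho> i"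
proof -
  let ?P = "map_poly (of_int :: int \<Rightarrow> 'a) \<rho>"
  have "?P = 0"
  proof (rule ccontr)
    assume "?P \<noteq> 0"
    have "(\<lambda>t. \<gamma> ^ (p ^ t)) ` {..<e} \<subseteq> {x. poly ?P x = 0}"
    proof
      fix x assume "x \<in> (\<lambda>t. \<gamma> ^ (p ^ t)) ` {..<e}"
      then obtain t where "x = \<gamma> ^ (p ^ t)" by auto
      then have "poly ?P x = (ev \<rho> \<gamma>) ^ (p ^ t)" using ev_frob by (simp add: ev_def)
      then show "x \<in> {x. poly ?P x = 0}" using ev0 p_pos by (simp add: power_0_left)
    qed
    then have "card ((\<lambda>t. \<gamma> ^ (p ^ t)) ` {..<e}) \<le> card {x. poly ?P x = 0}"
      by (intro card_mono) auto
    also have "\<dots> \<le> degree ?P" by (rule card_poly_roots_bound[OF \<open>?P \<noteq> 0\<close>])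
    also have "\<dots> \<le> degree \<rho>" by (rule map_poly_degree_leq)
    finally have "e \<le> degree \<rho>" using card_image[OF period_inj[OF per]] by simp
    then show False using deg by simp
  qed
  then have "poly.coeff ?P i = 0" by simp
  then show ?thesis by (simp add: coeff_map_poly of_int_eq0)
qed

definition pc :: "(nat \<Rightarrow> int) \<Rightarrow> int poly" where
  "pc c = (\<Sum>i<e. Polynomial.monom (c i) i)"

lemma coeff_pc: "poly.coeff (pc c) j = (if j < e then c j else 0)"
  by (simp add: pc_def coeff_sum coeff_monom)

lemma degree_pc: "degree (pc c) < e"
  unfolding pc_def
proof (rule degree_sum_less)
  fix i assume "i \<in> {..<e}"
  then show "degree (Polynomial.monom (c i) i) < e" using degree_monom_le[of "c i" i] by simp
qed (use e_pos in simp)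

lemma ev_surj:
  assumes per: "\<And>t. 0 < t \<Longrightarrow> t < e \<Longrightarrow> (\<gamma>::'a) ^ (p ^ t) \<noteq> \<gamma>"
  shows "\<exists>\<rho>. degree \<rho> < e \<and> ev \<rho> \<gamma> = x"
proof -
  let ?A = "PiE {..<e} (\<lambda>_. {0..<int p})"
  have inj: "inj_on (\<lambda>c. ev (pc c) \<gamma>) ?A"
  proof (rule inj_onI)
    fix c c' assume c: "c \<in> ?A" and c': "c' \<in> ?A" and eq: "ev (pc c) \<gamma> = ev (pc c') \<gamma>"
    have d: "ev (pc c - pc c') \<gamma> = 0" using eq by (simp add: ev_diff)
    have "degree (pc c - pc c') < e" using degree_pc by (intro degree_diff_less)
    note dv = lemC[OF per this d]
    show "c = c'"
    proof (rule PiE_ext[OF c c'])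
      fix j assume "j \<in> {..<e}"
      then have dvd: "int p dvd c j - c' j" using dv[of j] by (simp add: coeff_pc)
      have b: "0 \<le> c j" "c j < int p" "0 \<le> c' j" "c' j < int p"
        using c c' \<open>j \<in> {..<e}\<close> by (auto simp: PiE_def Pi_def)
      show "c j = c' j"
      proof (rule ccontr)
        assume "c j \<noteq> c' j"
        then have "c j - c' j \<noteq> 0" by simp
        from dvd_imp_le_int[OF this dvd] have "int p \<le> \<bar>c j - c' j\<bar>" by simp
        then show False using b by linarith
      qed
    qed
  qed
  have "card ((\<lambda>c. ev (pc c) \<gamma>) ` ?A) = card ?A" using card_image[OF inj] .
  also have "\<dots> = p ^ e" by (simp add: card_PiE)
  finally have cc: "card ((\<lambda>c. ev (pc c) \<gamma>) ` ?A) = card (UNIV :: 'a set)" using card_F by simp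
  have "(\<lambda>c. ev (pc c) \<gamma>) ` ?A = UNIV"
    by (rule card_subset_eq[OF _ _ cc]) simp_all
  then have "x \<in> (\<lambda>c. ev (pc c) \<gamma>) ` ?A" by simp
  then obtain c where "x = ev (pc c) \<gamma>" by (rule imageE)
  then show ?thesis using degree_pc[of c] by metis
qed

end

lemma ev_one: "ev 1 x = 1" by (simp add: ev_def)

locale twof = K: ffield p a tk + F: ffield p m tf
  for p a m :: nat and tk :: "'k::{field,finite} itself" and tf :: "'f::{field,finite} itself" +
  assumes a_dvd: "a dvd m"
begin

definition gam :: 'k where
  "gam = (SOME g. \<forall>t. 0 < t \<longrightarrow> t < a \<longrightarrow> g ^ (p ^ t) \<noteq> g)"

lemma gam_per: "0 < t \<Longrightarrow> t < a \<Longrightarrow> gam ^ (p ^ t) \<noteq> gam"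
proof -
  have "\<exists>g::'k. \<forall>t. 0 < t \<longrightarrow> t < a \<longrightarrow> g ^ (p ^ t) \<noteq> g"
  proof (rule K.exists_period)
    fix g :: 'k assume "\<And>t. 0 < t \<Longrightarrow> t < a \<Longrightarrow> g ^ (p ^ t) \<noteq> g"
    then show ?thesis by auto
  qed
  from someI_ex[OF this] show "0 < t \<Longrightarrow> t < a \<Longrightarrow> gam ^ (p ^ t) \<noteq> gam" unfolding gam_def by blast
qed

lemma gam_surj: "\<exists>\<rho>. degree \<rho> < a \<and> ev \<rho> gam = x"
  by (rule K.ev_surj) (rule gam_per)

definition rho_a :: "int poly" where
  "rho_a = (SOME \<rho>. degree \<rho> < a \<and> ev \<rho> gam = gam ^ a)"

lemma rho_a: "degree rho_a < a" "ev rho_a gam = gam ^ a"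
  using someI_ex[OF gam_surj[of "gam ^ a"]] unfolding rho_a_def by auto

definition mu :: "int poly" where
  "mu = Polynomial.monom 1 a - rho_a"

lemma coeff_mu_a: "poly.coeff mu a = 1"
proof -
  have "poly.coeff rho_a a = 0" using rho_a(1) by (simp add: coeff_eq_0)
  then show ?thesis by (simp add: mu_def)
qed

lemma degree_mu: "degree mu = a"
proof (rule antisym)
  show "degree mu \<le> a" unfolding mu_def
    using rho_a(1) degree_monom_le[of "1::int" a] by (intro degree_diff_le) auto
  show "a \<le> degree mu" using coeff_mu_a by (intro le_degree) simp
qed

lemma ev_mu_gam: "ev mu gam = 0"
  using rho_a(2) by (simp add: mu_def ev_diff ev_monom)

lemma mu_transfer:
  assumes "ev g gam = 0" "ev mu (y::'f) = 0"
  shows "ev g y = 0"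
proof -
  obtain s r where sr: "g = mu * s + r" "degree r < degree mu"
    using monic_div[of mu g] coeff_mu_a degree_mu K.e_pos by auto
  have "ev r gam = 0" using assms(1) ev_mu_gam by (simp add: sr(1) ev_add ev_mult)
  then have "int p dvd poly.coeff r i" for i
    using K.lemC[OF gam_per, of r] sr(2) degree_mu by auto
  then have "ev r y = 0" by (rule F.ev_dvd_zero)
  then show ?thesis using assms(2) by (simp add: sr(1) ev_add ev_mult)
qed

lemma exists_root: "\<exists>r::'f. ev mu r = 0"
proof (rule ccontr)
  assume nr: "\<not> (\<exists>r::'f. ev mu r = 0)"
  define Q where "Q = p ^ m"
  have Q1: "Q > 1" unfolding Q_def using F.p_gt1 F.e_pos by (intro one_less_power) auto
  define g :: "int poly" where "g = Polynomial.monom 1 Q - [:0, 1:]"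
  have evg: "ev g x = x ^ Q - x" for x :: "'b::comm_ring_1"
    by (simp add: g_def ev_diff ev_monom ev_pCons ev_0)
  have "ev g gam = 0"
  proof -
    obtain j where "m = a * j" using a_dvd by auto
    then have "Q = (p ^ a) ^ j" unfolding Q_def by (simp add: power_mult)
    then show ?thesis using K.pow_card_pow[of gam j] by (simp add: evg)
  qed
  obtain s r where sr: "g = mu * s + r" "degree r < degree mu"
    using monic_div[of mu g] coeff_mu_a degree_mu K.e_pos by auto
  have "ev r gam = 0" using \<open>ev g gam = 0\<close> ev_mu_gam by (simp add: sr(1) ev_add ev_mult)
  then have dv: "int p dvd poly.coeff r i" for i
    using K.lemC[OF gam_per, of r] sr(2) degree_mu by auto
  let ?mf = "map_poly (of_int :: int \<Rightarrow> 'f) mu"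
  let ?sf = "map_poly (of_int :: int \<Rightarrow> 'f) s"
  let ?gf = "map_poly (of_int :: int \<Rightarrow> 'f) g"
  have rf: "map_poly (of_int :: int \<Rightarrow> 'f) r = 0"
    by (intro poly_eqI) (simp add: coeff_map_poly F.of_int_eq0 dv)
  have gf: "?gf = ?mf * ?sf" using rf by (simp add: sr(1) map_of_int_add map_of_int_mult)
  have "poly.coeff ?gf Q = 1" using Q1 by (simp add: g_def coeff_map_poly coeff_pCons split: nat.split)
  then have gf0: "?gf \<noteq> 0" by auto
  have "degree ?gf \<le> Q"
  proof -
    have "degree g \<le> Q" unfolding g_def using Q1
      by (intro degree_diff_le) (simp_all add: degree_monom_le)
    then show ?thesis using map_poly_degree_leq[of "of_int :: int \<Rightarrow> 'f" g] by linarith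
  qed
  have "poly.coeff ?mf a = 1" using coeff_mu_a by (simp add: coeff_map_poly)
  then have "a \<le> degree ?mf" by (intro le_degree) simp
  have mf0: "?mf \<noteq> 0" and sf0: "?sf \<noteq> 0" using gf gf0 by auto
  have "degree ?gf = degree ?mf + degree ?sf" using gf degree_mult_eq[OF mf0 sf0] by simp
  then have dsf: "degree ?sf < Q" using \<open>degree ?gf \<le> Q\<close> \<open>a \<le> degree ?mf\<close> K.e_pos by linarith
  have "poly ?sf y = 0" for y
  proof -
    have "poly ?gf y = y ^ Q - y" using evg[of y] by (simp add: ev_def)
    also have "\<dots> = 0" unfolding Q_def by (simp add: F.pow_card)
    finally have "poly ?mf y * poly ?sf y = 0" using gf by simp
    moreover have "poly ?mf y \<noteq> 0" using nr by (simp add: ev_def)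
    ultimately show ?thesis by simp
  qed
  then have "{y. poly ?sf y = 0} = (UNIV :: 'f set)" by auto
  then have "card (UNIV :: 'f set) \<le> degree ?sf" using card_poly_roots_bound[OF sf0] by simp
  then show False using dsf F.card_F Q_def by simp
qed

definition rt :: 'f where "rt = (SOME r. ev mu r = 0)"

lemma rt: "ev mu rt = 0" unfolding rt_def using someI_ex[OF exists_root] .

definition phi :: "'k \<Rightarrow> 'f" where
  "phi x = ev (SOME g. ev g gam = x) rt"

lemma phi_wd: "ev g gam = ev h gam \<Longrightarrow> ev g rt = ev h rt"
proof -
  assume "ev g gam = ev h gam"
  then have "ev (g - h) gam = 0" by (simp add: ev_diff)
  then have "ev (g - h) rt = 0" using mu_transfer rt by blast
  then show ?thesis by (simp add: ev_diff)
qed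

lemma phi_ev: "phi (ev g gam) = ev g rt"
proof -
  have "\<exists>h. ev h gam = ev g gam" by blast
  then have "ev (SOME h. ev h gam = ev g gam) gam = ev g gam" by (rule someI_ex)
  then show ?thesis unfolding phi_def by (rule phi_wd)
qed

lemma ev_ex: "\<exists>g. ev g gam = x" using gam_surj by blast

lemma phi_add: "phi (x + y) = phi x + phi y"
proof -
  obtain g h where "x = ev g gam" "y = ev h gam" using ev_ex by metis
  then show ?thesis using phi_ev[of "g + h"] by (simp add: ev_add phi_ev)
qed

lemma phi_mult: "phi (x * y) = phi x * phi y"
proof -
  obtain g h where "x = ev g gam" "y = ev h gam" using ev_ex by metis
  then show ?thesis using phi_ev[of "g * h"] by (simp add: ev_mult phi_ev)
qed

lemma phi_one: "phi 1 = 1"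
  using phi_ev[of 1] by (simp add: ev_one)

lemma phi_zero: "phi 0 = 0"
  using phi_ev[of 0] by (simp add: ev_0)

lemma phi_diff: "phi (x - y) = phi x - phi y"
  using phi_add[of "x - y" y] by simp

lemma phi_pow: "phi (x ^ n) = phi x ^ n"
  by (induction n) (simp_all add: phi_one phi_mult)

lemma phi_sum: "phi (\<Sum>i\<in>A. f i) = (\<Sum>i\<in>A. phi (f i))"
  by (induction A rule: infinite_finite_induct) (simp_all add: phi_zero phi_add)

lemma phi_inj: "inj phi"
proof (rule injI)
  fix x y assume "phi x = phi y"
  then have d: "phi (x - y) = 0" by (simp add: phi_diff)
  show "x = y"
  proof (rule ccontr)
    assume "x \<noteq> y"
    then have "(x - y) * inverse (x - y) = 1" by simp
    then have "phi (x - y) * phi (inverse (x - y)) = 1" using phi_mult phi_one by metis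
    then show False using d by simp
  qed
qed

lemma phi_range: "range phi = {y::'f. y ^ (p ^ a) = y}"
proof -
  have sub: "range phi \<subseteq> {y::'f. y ^ (p ^ a) = y}"
  proof
    fix y assume "y \<in> range phi"
    then obtain x where "y = phi x" by auto
    then show "y \<in> {y::'f. y ^ (p ^ a) = y}" using K.pow_card[of x] by (simp add: phi_pow[symmetric])
  qed
  have "card (range phi) = p ^ a" using card_image[OF phi_inj] K.card_F by simp
  moreover have "card {y::'f. y ^ (p ^ a) = y} \<le> p ^ a"
    using K.p_gt1 K.e_pos by (intro F.roots_frob_le one_less_power) auto
  ultimately show ?thesis using sub by (intro card_seteq) auto
qed

lemma phi_tr: "phi (tr p a x) = tr p a (phi x)"
  by (simp add: tr_def phi_sum phi_pow)

end

lemma sum_split2: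
  fixes n k :: nat and g :: "nat \<Rightarrow> 'a::comm_monoid_add"
  shows "(\<Sum>i<n * k. g i) = (\<Sum>l<n. \<Sum>j<k. g (l * k + j))"
proof -
  have "(\<Sum>i<n * k. g i) = (\<Sum>l<n. sum g {l * k..<l * k + k})" using sum.nat_group[of g k n] by simp
  also have "\<dots> = (\<Sum>l<n. \<Sum>j<k. g (l * k + j))"
  proof (rule sum.cong[OF refl])
    fix l
    have "sum g {l * k..<l * k + k} = sum g {0 + l * k..<k + l * k}" by (simp add: add.commute)
    also have "\<dots> = (\<Sum>j\<in>{0..<k}. g (j + l * k))" by (rule sum.shift_bounds_nat_ivl)
    also have "\<dots> = (\<Sum>j<k. g (l * k + j))" by (simp add: atLeast0LessThan add.commute)
    finally show "sum g {l * k..<l * k + k} = (\<Sum>j<k. g (l * k + j))" .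
  qed
  finally show ?thesis .
qed

lemma sum_shift_cyc:
  assumes "f n = f 0"
  shows "(\<Sum>j<n. f (Suc j)) = (\<Sum>j<n. (f j :: 'a::ab_group_add))"
proof -
  have "(\<Sum>j<Suc n. f j) = f 0 + (\<Sum>j<n. f (Suc j))" by (rule sum.lessThan_Suc_shift)
  moreover have "(\<Sum>j<Suc n. f j) = (\<Sum>j<n. f j) + f n" by simp
  ultimately have "f 0 + (\<Sum>j<n. f (Suc j)) = f 0 + (\<Sum>j<n. f j)" using assms by (simp add: add.commute)
  then show ?thesis by simp
qed

locale main = twof p a m tk tf
  for p a m :: nat and tk :: "'k::{field,finite} itself" and tf :: "'f::{field,finite} itself" +
  fixes b c :: nat
  assumes mab: "m = a * b" and b_pos: "b > 0" and c_pos: "c > 0"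
    and c_dvd: "c dvd p ^ a - 1" and prim: "primitive_divisor p m (b * c)"
begin

abbreviation q where "q \<equiv> p ^ a"

definition T :: "'f \<Rightarrow> 'f" where "T x = (\<Sum>j<b. x ^ (q ^ j))"

lemma qpow: "q ^ j = p ^ (a * j)" by (simp add: power_mult)

lemma T_add: "T (x + y) = T x + T y"
  by (simp add: T_def qpow F.frob_add sum.distrib)

lemma T_zero: "T 0 = 0"
  using F.p_pos by (simp add: T_def power_0_left)

lemma T_sum: "T (\<Sum>i\<in>A. f i) = (\<Sum>i\<in>A. T (f i))"
  by (induction A rule: infinite_finite_induct) (simp_all add: T_add T_zero)

lemma fixq_pow: "y ^ q = (y::'f) \<Longrightarrow> y ^ (q ^ j) = y"
proof (induction j)
  case (Suc j)
  have "y ^ (q ^ Suc j) = (y ^ (q ^ j)) ^ q" by (simp add: power_mult[symmetric] mult.commute)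
  then show ?case using Suc by simp
qed simp

lemma T_lin: "y ^ q = y \<Longrightarrow> T (y * x) = y * T x"
  by (simp add: T_def power_mult_distrib fixq_pow sum_distrib_left)

lemma pow_Q: "(x::'f) ^ (q ^ b) = x"
  using F.pow_card[of x] by (simp add: qpow mab)

lemma T_fix: "(T x) ^ q = T x"
proof -
  have "(T x) ^ q = (\<Sum>j<b. (x ^ (q ^ j)) ^ q)" unfolding T_def by (rule F.frob_sum)
  also have "\<dots> = (\<Sum>j<b. x ^ (q ^ Suc j))" by (simp add: power_mult[symmetric] mult.commute)
  also have "\<dots> = (\<Sum>j<b. x ^ (q ^ j))" by (rule sum_shift_cyc[of "\<lambda>j. x ^ (q ^ j)"]) (simp add: pow_Q)
  finally show ?thesis unfolding T_def .
qed

lemma tr_T: "tr p m x = tr p a (T x)"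
proof -
  have "tr p a (T x) = (\<Sum>i<a. \<Sum>j<b. (x ^ (q ^ j)) ^ (p ^ i))"
    unfolding tr_def T_def by (simp add: F.frob_sum)
  also have "\<dots> = (\<Sum>j<b. \<Sum>i<a. x ^ (p ^ (j * a + i)))"
    by (subst sum.swap) (simp add: power_mult[symmetric] qpow power_add mult.commute)
  also have "\<dots> = (\<Sum>i<b * a. x ^ (p ^ i))" by (rule sum_split2[symmetric])
  also have "\<dots> = tr p m x" by (simp add: tr_def mab mult.commute)
  finally show ?thesis by simp
qed

end

context main begin

abbreviation n where "n \<equiv> b * c"
definition kk where "kk = (p ^ m - 1) div n"

lemma n_pos: "n > 0" using b_pos c_pos by simp

lemma Q1: "p ^ m > 1" using F.p_gt1 F.e_pos by (intro one_less_power) auto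

lemma n_dvd: "n dvd p ^ m - 1" using prim unfolding primitive_divisor_def by blast

lemma nkk: "n * kk = p ^ m - 1" unfolding kk_def using n_dvd by simp

lemma kk_pos: "kk > 0" using nkk Q1 by (metis gr0I mult_0_right zero_less_diff)

definition z :: 'f where "z = (SOME z. z ^ n = 1 \<and> (\<forall>j. 0 < j \<and> j < n \<longrightarrow> z ^ j \<noteq> 1))"

lemma z_prop: "z ^ n = 1" "\<And>j. 0 < j \<Longrightarrow> j < n \<Longrightarrow> z ^ j \<noteq> 1"
proof -
  have "\<exists>z::'f. z ^ n = 1 \<and> (\<forall>j. 0 < j \<and> j < n \<longrightarrow> z ^ j \<noteq> 1)"
  proof (rule F.elem_order[OF nkk kk_pos])
    fix y :: 'f assume "y ^ n = 1" "\<And>j. 0 < j \<Longrightarrow> j < n \<Longrightarrow> y ^ j \<noteq> 1"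
    then show ?thesis by blast
  qed
  from someI_ex[OF this] show "z ^ n = 1" "\<And>j. 0 < j \<Longrightarrow> j < n \<Longrightarrow> z ^ j \<noteq> 1"
    unfolding z_def by auto
qed

lemma z_nz: "z \<noteq> 0" using z_prop(1) n_pos by (auto simp: power_0_left)

lemma z_exp: "z ^ x = 1 \<Longrightarrow> n dvd x"
proof -
  assume "z ^ x = 1"
  then have "z ^ (x mod n) = 1" using F.order_pow_mod[OF z_prop(1)] by simp
  moreover have "x mod n < n" using n_pos by simp
  ultimately have "x mod n = 0" using z_prop(2)[of "x mod n"] by (cases "x mod n = 0") simp_all
  then show ?thesis by (simp add: dvd_eq_mod_eq_0)
qed

lemma coprime_n_p: "coprime n p"
proof -
  have "\<not> p dvd n"
  proof
    assume "p dvd n"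
    then have "p dvd p ^ m - 1" using n_dvd by (rule dvd_trans)
    moreover have "p dvd p ^ m" using F.e_pos by simp
    ultimately have "p dvd p ^ m - (p ^ m - 1)" by (rule dvd_diff_nat[rotated])
    then have "p dvd 1" using Q1 by simp
    then show False using F.p_gt1 by simp
  qed
  then have "coprime p n" using F.prime_p by (intro prime_imp_coprime)
  then show ?thesis by (rule coprime_commute[THEN iffD1])
qed

lemma conj_distinct:
  assumes "s < t" "t < b"
  shows "z ^ (q ^ s) \<noteq> z ^ (q ^ t)"
proof
  assume eq: "z ^ (q ^ s) = z ^ (q ^ t)"
  have le: "q ^ s \<le> q ^ t" using assms K.p_pos by (intro power_increasing) auto
  have "z ^ (q ^ s) * z ^ (q ^ t - q ^ s) = z ^ (q ^ s + (q ^ t - q ^ s))" by (rule power_add[symmetric])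
  also have "\<dots> = z ^ (q ^ t)" using le by simp
  also have "\<dots> = z ^ (q ^ s)" by (rule eq[symmetric])
  also have "\<dots> = z ^ (q ^ s) * 1" by simp
  finally have "z ^ (q ^ s) * z ^ (q ^ t - q ^ s) = z ^ (q ^ s) * 1" .
  moreover have "z ^ (q ^ s) \<noteq> 0" using z_nz by simp
  ultimately have "z ^ (q ^ t - q ^ s) = 1" by (rule mult_left_cancel[THEN iffD1, rotated])
  then have d: "n dvd q ^ t - q ^ s" by (rule z_exp)
  have ts: "s + (t - s) = t" using assms by simp
  have e1: "q ^ s * q ^ (t - s) = q ^ t" by (simp only: power_add[symmetric] ts)
  have e2: "q ^ s * (q ^ (t - s) - 1) = q ^ t - q ^ s" by (simp only: diff_mult_distrib2 e1 mult_1_right)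
  have "n dvd q ^ s * (q ^ (t - s) - 1)" by (subst e2) (rule d)
  moreover have "coprime n (q ^ s)" using coprime_n_p by simp
  ultimately have "n dvd q ^ (t - s) - 1" using coprime_dvd_mult_right_iff[of n "q ^ s" "q ^ (t - s) - 1"] by simp
  then have dv: "n dvd p ^ (a * (t - s)) - 1" by (simp add: power_mult)
  have "1 \<le> a * (t - s)" "a * (t - s) < m" using assms K.e_pos mab by auto
  moreover have "\<forall>t. 1 \<le> t \<and> t < m \<longrightarrow> \<not> n dvd p ^ t - 1" using prim unfolding primitive_divisor_def by simp
  ultimately show False using dv by blast
qed

lemma indep:
  assumes fx: "\<And>j. j < b \<Longrightarrow> cc j ^ q = cc j" and s0: "(\<Sum>j<b. cc j * z ^ j) = 0"
  shows "j < b \<Longrightarrow> cc j = 0"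
proof -
  let ?P = "\<Sum>j<b. Polynomial.monom (cc j) j"
  have coeffP: "poly.coeff ?P j = (if j < b then cc j else 0)" for j
    by (simp add: coeff_sum coeff_monom)
  have degP: "degree ?P < b"
  proof (rule degree_sum_less)
    fix i assume "i \<in> {..<b}"
    then show "degree (Polynomial.monom (cc i) i) < b" using degree_monom_le[of "cc i" i] by simp
  qed (use b_pos in simp)
  have polyP: "poly ?P y = (\<Sum>j<b. cc j * y ^ j)" for y by (simp add: poly_sum poly_monom)
  have "?P = 0"
  proof (rule ccontr)
    assume "?P \<noteq> 0"
    have "(\<lambda>t. z ^ (q ^ t)) ` {..<b} \<subseteq> {y. poly ?P y = 0}"
    proof
      fix y assume "y \<in> (\<lambda>t. z ^ (q ^ t)) ` {..<b}"
      then obtain t where yt: "y = z ^ (q ^ t)" by auto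
      have "poly ?P y = (\<Sum>j<b. (cc j * z ^ j) ^ (q ^ t))"
        unfolding polyP yt
      proof (rule sum.cong[OF refl])
        fix j assume "j \<in> {..<b}"
        then have "cc j ^ (q ^ t) = cc j" using fx fixq_pow by simp
        then show "cc j * (z ^ q ^ t) ^ j = (cc j * z ^ j) ^ q ^ t"
          by (simp add: power_mult_distrib power_mult[symmetric] mult.commute)
      qed
      also have "\<dots> = (\<Sum>j<b. cc j * z ^ j) ^ (q ^ t)" by (simp add: qpow F.frob_sum)
      also have "\<dots> = 0" using s0 K.p_pos by (simp add: power_0_left)
      finally show "y \<in> {y. poly ?P y = 0}" by simp
    qed
    moreover have "inj_on (\<lambda>t. z ^ (q ^ t)) {..<b}"
    proof (rule inj_onI)
      fix s t assume st: "s \<in> {..<b}" "t \<in> {..<b}" "z ^ (q ^ s) = z ^ (q ^ t)"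
      show "s = t"
      proof (rule ccontr)
        assume "s \<noteq> t"
        then consider "s < t" | "t < s" by linarith
        then show False
        proof cases
          case 1 then show False using conj_distinct[of s t] st by simp
        next
          case 2 then show False using conj_distinct[of t s] st by simp
        qed
      qed
    qed
    ultimately have "card ((\<lambda>t. z ^ (q ^ t)) ` {..<b}) \<le> card {y. poly ?P y = 0}"
      by (intro card_mono) auto
    moreover have "card ((\<lambda>t. z ^ (q ^ t)) ` {..<b}) = b"
      using card_image[OF \<open>inj_on (\<lambda>t. z ^ (q ^ t)) {..<b}\<close>] by simp
    ultimately have "b \<le> card {y. poly ?P y = 0}" by simp
    also have "\<dots> \<le> degree ?P" by (rule card_poly_roots_bound[OF \<open>?P \<noteq> 0\<close>])
    finally show False using degP by simp
  qed
  then have "poly.coeff ?P j = 0" by simp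
  then show "j < b \<Longrightarrow> cc j = 0" using coeffP[of j] by simp
qed

end

context main begin

lemma card_Kp: "card {y::'f. y ^ q = y} = q"
  using card_image[OF phi_inj] K.card_F phi_range by simp

lemma Kp_diff: "(x::'f) ^ q = x \<Longrightarrow> y ^ q = y \<Longrightarrow> (x - y) ^ q = x - y"
  using F.frob_diff[of x y a] by simp

lemma q_gt1: "q > 1" using K.p_gt1 K.e_pos by (intro one_less_power) auto

lemma Qq: "p ^ m = q ^ b" by (simp add: mab power_mult)

lemma span: "\<exists>cc. (\<forall>j<b. cc j ^ q = cc j) \<and> y = (\<Sum>j<b. cc j * z ^ j)"
proof -
  let ?A = "PiE {..<b} (\<lambda>_. {y::'f. y ^ q = y})"
  let ?psi = "\<lambda>cc. (\<Sum>j<b. cc j * z ^ j)"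
  have inj: "inj_on ?psi ?A"
  proof (rule inj_onI)
    fix cc cc' assume c: "cc \<in> ?A" and c': "cc' \<in> ?A" and eq: "?psi cc = ?psi cc'"
    have fx: "(cc j - cc' j) ^ q = cc j - cc' j" if "j < b" for j
      using c c' that by (intro Kp_diff) (auto simp: PiE_def Pi_def)
    have "(\<Sum>j<b. (cc j - cc' j) * z ^ j) = ?psi cc - ?psi cc'"
      by (simp add: sum_subtractf left_diff_distrib)
    also have "\<dots> = 0" using eq by simp
    finally have s0: "(\<Sum>j<b. (cc j - cc' j) * z ^ j) = 0" .
    show "cc = cc'"
    proof (rule PiE_ext[OF c c'])
      fix j assume "j \<in> {..<b}"
      then have "cc j - cc' j = 0" using indep[of "\<lambda>j. cc j - cc' j", OF fx s0] by simp
      then show "cc j = cc' j" by simp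
    qed
  qed
  have "card (?psi ` ?A) = card ?A" by (rule card_image[OF inj])
  also have "\<dots> = q ^ b" by (simp add: card_PiE card_Kp)
  finally have cc: "card (?psi ` ?A) = card (UNIV :: 'f set)" using F.card_F Qq by simp
  have "?psi ` ?A = UNIV" by (rule card_subset_eq[OF _ _ cc]) simp_all
  then have "y \<in> ?psi ` ?A" by simp
  then obtain cc where "cc \<in> ?A" "y = ?psi cc" by (rule imageE)
  moreover have "\<forall>j<b. cc j ^ q = cc j" using \<open>cc \<in> ?A\<close> by (auto simp: PiE_def Pi_def)
  ultimately show ?thesis by blast
qed

lemma T_nonzero: "\<exists>y. T y \<noteq> 0"
proof (rule ccontr)
  assume "\<not> (\<exists>y. T y \<noteq> 0)"
  then have allz: "T y = 0" for y by simp
  let ?P = "\<Sum>j<b. Polynomial.monom (1::'f) (q ^ j)"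
  have ev: "poly ?P y = T y" for y by (simp add: T_def poly_sum poly_monom)
  have degle: "degree ?P \<le> q ^ (b - 1)"
  proof (rule degree_sum_le)
    fix i assume "i \<in> {..<b}"
    then have "q ^ i \<le> q ^ (b - 1)" using q_gt1 by (intro power_increasing) auto
    then show "degree (Polynomial.monom (1::'f) (q ^ i)) \<le> q ^ (b - 1)"
      using degree_monom_le[of "1::'f" "q ^ i"] by linarith
  qed simp
  have inj: "q ^ i = q ^ j \<longleftrightarrow> i = j" for i j using q_gt1 by (simp add: power_inject_exp)
  have "poly.coeff ?P (q ^ (b - 1)) = (\<Sum>i<b. if i = b - 1 then 1 else 0)"
    by (simp add: coeff_sum coeff_monom inj)
  also have "\<dots> = 1" using b_pos by simp
  finally have "?P \<noteq> 0" by auto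
  have "{y. poly ?P y = 0} = (UNIV :: 'f set)" using allz ev by simp
  then have "p ^ m \<le> degree ?P" using card_poly_roots_bound[OF \<open>?P \<noteq> 0\<close>] F.card_F by simp
  then have "q ^ b \<le> q ^ (b - 1)" using degle Qq by simp
  moreover have "q ^ (b - 1) < q ^ b" using q_gt1 b_pos by (intro power_strict_increasing) auto
  ultimately show False by simp
qed

lemma T_diff: "T (x - y) = T x - T y"
  using T_add[of "x - y" y] by simp

lemma LA:
  assumes v: "\<And>j. j < b \<Longrightarrow> v j ^ q = v j"
  shows "\<exists>\<beta>. \<forall>j<b. T (\<beta> * z ^ j) = v j"
proof -
  let ?A = "PiE {..<b} (\<lambda>_. {y::'f. y ^ q = y})"
  let ?L = "\<lambda>\<beta>. restrict (\<lambda>j. T (\<beta> * z ^ j)) {..<b}"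
  have inj: "inj ?L"
  proof (rule injI)
    fix \<beta> \<beta>' assume eq: "?L \<beta> = ?L \<beta>'"
    let ?d = "\<beta> - \<beta>'"
    have dz: "T (?d * z ^ j) = 0" if "j < b" for j
    proof -
      have "T (\<beta> * z ^ j) = T (\<beta>' * z ^ j)" using fun_cong[OF eq, of j] that by simp
      then show ?thesis by (simp add: left_diff_distrib T_diff)
    qed
    show "\<beta> = \<beta>'"
    proof (rule ccontr)
      assume "\<beta> \<noteq> \<beta>'"
      then have d0: "?d \<noteq> 0" by simp
      obtain y0 where y0: "T y0 \<noteq> 0" using T_nonzero by blast
      obtain cc where cc: "\<forall>j<b. cc j ^ q = cc j" "y0 / ?d = (\<Sum>j<b. cc j * z ^ j)"
        using span[of "y0 / ?d"] by blast
      have "y0 = ?d * (y0 / ?d)" using d0 by simp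
      also have "\<dots> = (\<Sum>j<b. cc j * (?d * z ^ j))" using cc(2) by (simp add: sum_distrib_left mult_ac)
      finally have "T y0 = (\<Sum>j<b. T (cc j * (?d * z ^ j)))" by (simp add: T_sum)
      also have "\<dots> = (\<Sum>j<b. cc j * T (?d * z ^ j))"
        by (rule sum.cong[OF refl]) (use cc(1) in \<open>simp add: T_lin\<close>)
      also have "\<dots> = 0" using dz by simp
      finally show False using y0 by contradiction
    qed
  qed
  have sub: "range ?L \<subseteq> ?A"
    using T_fix by (auto simp: PiE_def Pi_def)
  have "card (range ?L) = card (UNIV :: 'f set)" by (rule card_image[OF inj])
  also have "\<dots> = card ?A" using F.card_F Qq by (simp add: card_PiE card_Kp)
  finally have cA: "card (range ?L) = card ?A" .
  have finA: "finite ?A" by (rule finite_PiE) simp_all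
  have rA: "range ?L = ?A" by (rule card_subset_eq[OF finA sub cA])
  have "restrict v {..<b} \<in> ?A" using v by (auto simp: PiE_def Pi_def)
  then have "restrict v {..<b} \<in> range ?L" by (simp only: rA)
  then obtain \<beta> where "restrict v {..<b} = ?L \<beta>" by (rule rangeE)
  then have Lb: "?L \<beta> = restrict v {..<b}" by simp
  have "T (\<beta> * z ^ j) = v j" if "j < b" for j using fun_cong[OF Lb, of j] that by simp
  then show ?thesis by blast
qed

end

lemma card_filter_image:
  assumes "inj_on f A"
  shows "card {x. x \<in> f ` A \<and> P x} = card {y. y \<in> A \<and> P (f y)}"
proof -
  have "{x. x \<in> f ` A \<and> P x} = f ` {y. y \<in> A \<and> P (f y)}" by auto
  moreover have "inj_on f {y. y \<in> A \<and> P (f y)}" using assms by (rule inj_on_subset) auto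
  ultimately show ?thesis by (simp add: card_image)
qed

lemma card_lt_sum: "card {i. i < (N::nat) \<and> P i} = (\<Sum>i<N. if P i then 1 else (0::nat))"
proof -
  have "card {i \<in> {..<N}. P i} = (\<Sum>i \<in> {i \<in> {..<N}. P i}. (1::nat))" by simp
  also have "\<dots> = (\<Sum>i<N. if P i then 1 else (0::nat))" by (rule sum.inter_filter) simp
  finally show ?thesis by simp
qed

context main begin

definition uu where "uu = (q - 1) div c"

lemma cuu: "c * uu = q - 1" unfolding uu_def using c_dvd by simp

lemma uu_pos: "uu > 0" using cuu q_gt1 by (metis gr0I mult_0_right zero_less_diff)

definition M :: "'f \<Rightarrow> nat" where
  "M g = card {l. l < c \<and> tr p a (g * z ^ (b * l)) = 0}"

lemma rootc_fix: "(w::'f) ^ c = 1 \<Longrightarrow> w ^ q = w"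
proof -
  assume wc: "w ^ c = 1"
  have "w ^ (q - 1) = (w ^ c) ^ uu" by (simp only: cuu[symmetric] power_mult)
  then have "w ^ (q - 1) = 1" using wc by simp
  have sq: "Suc (q - 1) = q" using q_gt1 by simp
  have "w ^ q = w ^ Suc (q - 1)" by (simp only: sq)
  also have "\<dots> = w * w ^ (q - 1)" by (rule power_Suc)
  finally show "w ^ q = w" using \<open>w ^ (q - 1) = 1\<close> by simp
qed

lemma zbl_fix: "(z ^ (b * l)) ^ q = z ^ (b * l)"
proof (rule rootc_fix)
  have "(z ^ (b * l)) ^ c = (z ^ n) ^ l" by (simp only: power_mult[symmetric] mult_ac)
  then show "(z ^ (b * l)) ^ c = 1" using z_prop(1) by simp
qed

lemma NF_dec: "card {h::'f. h ^ n = 1 \<and> tr p m (\<beta> * h) = 0} = (\<Sum>j<b. M (T (\<beta> * z ^ j)))"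
proof -
  have roots: "{h::'f. h ^ n = 1} = (\<lambda>i. z ^ i) ` {..<n}"
    by (rule F.order_roots[OF z_prop n_pos])
  have inj: "inj_on (\<lambda>i. z ^ i) {..<n}" by (rule F.order_inj[OF z_prop])
  have "{h::'f. h ^ n = 1 \<and> tr p m (\<beta> * h) = 0} = {h. h \<in> (\<lambda>i. z ^ i) ` {..<n} \<and> tr p m (\<beta> * h) = 0}"
    using roots by auto
  then have "card {h::'f. h ^ n = 1 \<and> tr p m (\<beta> * h) = 0} = card {i. i \<in> {..<n} \<and> tr p m (\<beta> * z ^ i) = 0}"
    using card_filter_image[OF inj] by simp
  also have "\<dots> = (\<Sum>i<c * b. if tr p m (\<beta> * z ^ i) = 0 then 1 else 0)"
    using card_lt_sum[of "c * b"] by (simp add: mult.commute)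
  also have "\<dots> = (\<Sum>l<c. \<Sum>j<b. if tr p m (\<beta> * z ^ (l * b + j)) = 0 then 1 else 0)"
    by (rule sum_split2)
  also have "\<dots> = (\<Sum>j<b. \<Sum>l<c. if tr p m (\<beta> * z ^ (l * b + j)) = 0 then 1 else 0)"
    by (rule sum.swap)
  also have "\<dots> = (\<Sum>j<b. M (T (\<beta> * z ^ j)))"
  proof (rule sum.cong[OF refl])
    fix j
    have "tr p m (\<beta> * z ^ (l * b + j)) = tr p a (T (\<beta> * z ^ j) * z ^ (b * l))" for l
    proof -
      have e: "\<beta> * z ^ (l * b + j) = z ^ (b * l) * (\<beta> * z ^ j)" by (simp add: power_add mult_ac)
      have "tr p m (\<beta> * z ^ (l * b + j)) = tr p a (T (z ^ (b * l) * (\<beta> * z ^ j)))" unfolding e by (rule tr_T)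
      also have "\<dots> = tr p a (z ^ (b * l) * T (\<beta> * z ^ j))" by (simp add: T_lin zbl_fix)
      finally show ?thesis by (simp add: mult.commute)
    qed
    then have "(\<Sum>l<c. if tr p m (\<beta> * z ^ (l * b + j)) = 0 then 1 else (0::nat))
        = (\<Sum>l<c. if tr p a (T (\<beta> * z ^ j) * z ^ (b * l)) = 0 then 1 else 0)" by simp
    also have "\<dots> = M (T (\<beta> * z ^ j))" unfolding M_def using card_lt_sum by simp
    finally show "(\<Sum>l<c. if tr p m (\<beta> * z ^ (l * b + j)) = 0 then 1 else (0::nat)) = M (T (\<beta> * z ^ j))" .
  qed
  finally show ?thesis .
qed

lemma zb_order: "(z ^ b) ^ c = 1" "\<And>l. 0 < l \<Longrightarrow> l < c \<Longrightarrow> (z ^ b) ^ l \<noteq> 1"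
proof -
  show "(z ^ b) ^ c = 1" using z_prop(1) by (simp add: power_mult[symmetric])
  fix l assume "0 < l" "l < c"
  then have "0 < b * l" "b * l < n" using b_pos by auto
  then show "(z ^ b) ^ l \<noteq> 1" using z_prop(2) by (simp add: power_mult[symmetric])
qed

lemma NK_eq: "card {h::'k. h ^ c = 1 \<and> tr p a (\<alpha> * h) = 0} = M (phi \<alpha>)"
proof -
  let ?S = "{h::'k. h ^ c = 1 \<and> tr p a (\<alpha> * h) = 0}"
  let ?S' = "{h::'f. h ^ c = 1 \<and> tr p a (phi \<alpha> * h) = 0}"
  have img: "phi ` ?S = ?S'"
  proof (intro equalityI subsetI)
    fix y assume "y \<in> phi ` ?S"
    then obtain h where h: "h ^ c = 1" "tr p a (\<alpha> * h) = 0" "y = phi h" by auto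
    have "y ^ c = 1" using h by (simp add: phi_pow[symmetric] phi_one)
    moreover have "tr p a (phi \<alpha> * y) = 0" using h by (simp add: phi_mult[symmetric] phi_tr[symmetric] phi_zero)
    ultimately show "y \<in> ?S'" by simp
  next
    fix y assume "y \<in> ?S'"
    then have y: "y ^ c = 1" "tr p a (phi \<alpha> * y) = 0" by auto
    from y(1) have "y ^ q = y" by (rule rootc_fix)
    then have "y \<in> range phi" using phi_range by simp
    then obtain h where hy: "y = phi h" by auto
    have "phi (h ^ c) = phi 1" using y(1) hy by (simp add: phi_pow phi_one)
    then have "h ^ c = 1" using phi_inj by (simp add: inj_eq)
    moreover have "phi (tr p a (\<alpha> * h)) = phi 0" using y(2) hy by (simp add: phi_tr phi_mult phi_zero)
    then have "tr p a (\<alpha> * h) = 0" using phi_inj by (simp add: inj_eq)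
    ultimately show "y \<in> phi ` ?S" using hy by auto
  qed
  have "card (phi ` ?S) = card ?S" by (rule card_image[OF inj_on_subset[OF phi_inj subset_UNIV]])
  then have "card ?S = card ?S'" using img by simp
  also have "?S' = {h. h \<in> (\<lambda>l. (z ^ b) ^ l) ` {..<c} \<and> tr p a (phi \<alpha> * h) = 0}"
    using F.order_roots[OF zb_order c_pos] by auto
  also have "card \<dots> = card {l. l \<in> {..<c} \<and> tr p a (phi \<alpha> * (z ^ b) ^ l) = 0}"
    by (rule card_filter_image[OF F.order_inj[OF zb_order]])
  also have "\<dots> = M (phi \<alpha>)" unfolding M_def by (simp add: power_mult)
  finally show ?thesis .
qed

end

lemma arith_id:
  fixes B P Q0 k u S psi psi' :: real
  assumes "psi = 1 + Q0 * psi'" "u * psi = B * k" "B > 0"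
  shows "1 / B * psi * (B * (1 + P) + P * u * S) - (P + 1) * Q0 * psi' = 1 + P + P * k * S"
proof -
  have "1 / B * psi * (B * (1 + P) + P * u * S) = psi * (1 + P) + P * S * (u * psi) / B"
    using assms(3) by (simp add: field_simps)
  also have "\<dots> = psi * (1 + P) + P * S * k" using assms(2,3) by simp
  finally have "1 / B * psi * (B * (1 + P) + P * u * S) - (P + 1) * Q0 * psi'
      = (1 + P) * (psi - Q0 * psi') + P * k * S" by (simp add: algebra_simps)
  also have "\<dots> = 1 + P + P * k * S" using assms(1) by simp
  finally show ?thesis .
qed

context main begin

definition NF :: "'f \<Rightarrow> nat" where "NF \<beta> = card {h::'f. h ^ n = 1 \<and> tr p m (\<beta> * h) = 0}"
definition NK :: "'k \<Rightarrow> nat" where "NK \<alpha> = card {h::'k. h ^ c = 1 \<and> tr p a (\<alpha> * h) = 0}"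

lemma ASF: "AS_points p kk \<beta> = 1 + p * (1 + kk * NF \<beta>)"
  unfolding NF_def by (rule F.AS_formula[OF nkk kk_pos])

lemma ASK: "AS_points p uu \<alpha> = 1 + p * (1 + uu * NK \<alpha>)"
  unfolding NK_def by (rule K.AS_formula[OF cuu uu_pos])

lemma psi_rec: "Psi b x = 1 + x * Psi (b - 1) x"
proof -
  obtain b' where "b = Suc b'" using b_pos by (cases b) auto
  then show ?thesis unfolding Psi_def by (simp only: sum.lessThan_Suc_shift sum_distrib_left power_Suc power_0 diff_Suc_1)
qed

lemma psi_rel: "real uu * Psi b (real q) = real b * real kk"
proof -
  have "real n * real kk = real (p ^ m) - 1" using nkk Q1 by (metis of_nat_1 of_nat_diff of_nat_mult less_imp_le)
  also have "real (p ^ m) = real q ^ b" using Qq by simp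
  also have "real q ^ b - 1 = (real q - 1) * Psi b (real q)" unfolding Psi_def by (rule power_diff_1_eq)
  also have "real q - 1 = real c * real uu" using cuu q_gt1 by (metis of_nat_1 of_nat_diff of_nat_mult less_imp_le)
  finally have "real c * (real b * real kk) = real c * (real uu * Psi b (real q))" by (simp add: mult_ac)
  then show ?thesis using c_pos by simp
qed

lemma key:
  assumes "NF \<beta> = (\<Sum>i = 1..b. NK (\<alpha> i))"
  shows "real (AS_points p kk \<beta>) =
    1 / real b * Psi b (real p ^ a) * (\<Sum>i = 1..b. real (AS_points p uu (\<alpha> i)))
    - (real p + 1) * real p ^ a * Psi (b - 1) (real p ^ a)"
proof -
  let ?S = "(\<Sum>i = 1..b. real (NK (\<alpha> i)))"
  have "(\<Sum>i = 1..b. real (AS_points p uu (\<alpha> i))) = (\<Sum>i = 1..b. (1 + real p) + (real p * real uu) * real (NK (\<alpha> i)))"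
    by (rule sum.cong[OF refl]) (simp add: ASK algebra_simps)
  also have "\<dots> = real b * (1 + real p) + real p * real uu * ?S"
    by (simp add: sum.distrib sum_distrib_left)
  finally have s: "(\<Sum>i = 1..b. real (AS_points p uu (\<alpha> i))) = real b * (1 + real p) + real p * real uu * ?S" .
  have "1 / real b * Psi b (real q) * (real b * (1 + real p) + real p * real uu * ?S)
        - (real p + 1) * real q * Psi (b - 1) (real q) = 1 + real p + real p * real kk * ?S"
    by (rule arith_id[OF psi_rec psi_rel]) (use b_pos in simp)
  moreover have "real (AS_points p kk \<beta>) = 1 + real p + real p * real kk * ?S"
    using assms by (simp add: ASF algebra_simps)
  ultimately show ?thesis using s by simp
qed

lemma dir1:
  fixes \<beta> :: 'f
  shows "\<exists>\<alpha>::nat \<Rightarrow> 'k. real (AS_points p kk \<beta>) =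
    1 / real b * Psi b (real p ^ a) * (\<Sum>i = 1..b. real (AS_points p uu (\<alpha> i)))
    - (real p + 1) * real p ^ a * Psi (b - 1) (real p ^ a)"
proof -
  define \<alpha> where "\<alpha> = (\<lambda>i. inv_into UNIV phi (T (\<beta> * z ^ (i - 1))))"
  have pa: "phi (\<alpha> i) = T (\<beta> * z ^ (i - 1))" for i
  proof -
    have "T (\<beta> * z ^ (i - 1)) \<in> range phi" using phi_range T_fix by simp
    then show ?thesis unfolding \<alpha>_def by (rule f_inv_into_f)
  qed
  have "(\<Sum>i = 1..b. NK (\<alpha> i)) = (\<Sum>i = 1..b. M (T (\<beta> * z ^ (i - 1))))"
    by (rule sum.cong[OF refl]) (simp add: NK_def NK_eq pa)
  also have "\<dots> = (\<Sum>j<b. M (T (\<beta> * z ^ j)))" by (simp add: sum.atLeast1_atMost_eq)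
  also have "\<dots> = NF \<beta>" unfolding NF_def by (rule NF_dec[symmetric])
  finally have e: "(\<Sum>i = 1..b. NK (\<alpha> i)) = NF \<beta>" .
  show ?thesis by (rule exI[of _ \<alpha>], rule key, rule e[symmetric])
qed

lemma dir2:
  fixes \<alpha> :: "nat \<Rightarrow> 'k"
  shows "\<exists>\<beta>::'f. real (AS_points p kk \<beta>) =
    1 / real b * Psi b (real p ^ a) * (\<Sum>i = 1..b. real (AS_points p uu (\<alpha> i)))
    - (real p + 1) * real p ^ a * Psi (b - 1) (real p ^ a)"
proof -
  have fx: "(phi (\<alpha> (Suc j))) ^ q = phi (\<alpha> (Suc j))" if "j < b" for j
    using phi_range by auto
  have "\<exists>\<beta>. \<forall>j<b. T (\<beta> * z ^ j) = phi (\<alpha> (Suc j))" by (rule LA[OF fx])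
  then obtain \<beta> where \<beta>: "\<forall>j<b. T (\<beta> * z ^ j) = phi (\<alpha> (Suc j))" by blast
  have "NF \<beta> = (\<Sum>j<b. M (T (\<beta> * z ^ j)))" unfolding NF_def by (rule NF_dec)
  also have "\<dots> = (\<Sum>j<b. NK (\<alpha> (Suc j)))"
    by (rule sum.cong[OF refl]) (simp add: \<beta> NK_def NK_eq)
  also have "\<dots> = (\<Sum>i = 1..b. NK (\<alpha> i))" by (simp add: sum.atLeast1_atMost_eq)
  finally show ?thesis by (intro exI) (rule key)
qed

end

theorem corollary6p2:
  fixes p a b c :: nat
  assumes "prime p"
    and "0 < a" and "0 < b" and "0 < c" and "b > 1"
    and "c dvd p ^ a - 1" and "primitive_divisor p a c" and "(p - 1) dvd c"
    and "primitive_divisor p (a * b) (b * c)"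
    and "card (UNIV :: 'F set) = p ^ (a * b)"
    and "card (UNIV :: 'K set) = p ^ a"
  shows "(\<forall>\<beta> :: 'F::{field,finite}. \<exists>\<alpha> :: nat \<Rightarrow> 'K.
            real (AS_points p ((p ^ (a * b) - 1) div (b * c)) \<beta>) =
              1 / real b * Psi b (real p ^ a) *
                (\<Sum>i = 1..b. real (AS_points p ((p ^ a - 1) div c) (\<alpha> i)))
              - (real p + 1) * real p ^ a * Psi (b - 1) (real p ^ a))
       \<and> (\<forall>\<alpha> :: nat \<Rightarrow> 'K::{field,finite}. \<exists>\<beta> :: 'F.
            real (AS_points p ((p ^ (a * b) - 1) div (b * c)) \<beta>) =
              1 / real b * Psi b (real p ^ a) *
                (\<Sum>i = 1..b. real (AS_points p ((p ^ a - 1) div c) (\<alpha> i)))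
              - (real p + 1) * real p ^ a * Psi (b - 1) (real p ^ a))"
proof -
  interpret M: main p a "a * b" "TYPE('K)" "TYPE('F)" b c
    by unfold_locales (use assms in auto)
  have kk: "M.kk = (p ^ (a * b) - 1) div (b * c)" by (simp add: M.kk_def)
  have uu: "M.uu = (p ^ a - 1) div c" by (simp add: M.uu_def)
  show ?thesis
  proof (intro conjI allI)
    fix \<beta> :: 'F
    show "\<exists>\<alpha> :: nat \<Rightarrow> 'K.
            real (AS_points p ((p ^ (a * b) - 1) div (b * c)) \<beta>) =
              1 / real b * Psi b (real p ^ a) *
                (\<Sum>i = 1..b. real (AS_points p ((p ^ a - 1) div c) (\<alpha> i)))
              - (real p + 1) * real p ^ a * Psi (b - 1) (real p ^ a)"
      using M.dir1[of \<beta>] unfolding kk uu .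
  next
    fix \<alpha> :: "nat \<Rightarrow> 'K"
    show "\<exists>\<beta> :: 'F.
            real (AS_points p ((p ^ (a * b) - 1) div (b * c)) \<beta>) =
              1 / real b * Psi b (real p ^ a) *
                (\<Sum>i = 1..b. real (AS_points p ((p ^ a - 1) div c) (\<alpha> i)))
              - (real p + 1) * real p ^ a * Psi (b - 1) (real p ^ a)"
      using M.dir2[of \<alpha>] unfolding kk uu .
  qed
qed

end
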